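(* For every integer $n\ge 2$ and every real number $p\in(0,1)$, \[ \bigl(n^p-(n-1)^p\bigr)^{1/(1-p)}+3^{-p/(1-p)}\bigl((n-2)n^p-(n-3)(n-1)^p\bigr)^{1/(1-p)}\le (n-1)^{p/(1-p)}. \] *)

theory Defs
  imports Complex_Main
begin

end

theory Submission imports Defs "HOL-Analysis.Convex" begin

lemma ln3_ge1: "1 \<le> ln (3::real)"
  using exp_le by (subst ln_ge_iff) auto

lemma expm_le: "0 \<le> x \<Longrightarrow> exp (-x) \<le> 1 / (1 + (x::real))"
proof -
  assume "0 \<le> x"
  have "1 + x \<le> exp x" by simp
  then show ?thesis using \<open>0 \<le> x\<close> by (simp add: exp_minus field_simps)
qed

lemma E1:
  fixes p :: real assumes "0 < p" "p < 1"
  shows "3 powr (-(p/(1-p))) * (1+p) powr (1/(1-p)) \<le> 1"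
proof -
  have "ln (1+p) \<le> p" using assms by (intro ln_add_one_self_le_self) auto
  also have "\<dots> \<le> p * ln 3" using ln3_ge1 assms by simp
  finally have h: "ln (1+p) \<le> p * ln 3" .
  have "-(p/(1-p)) * ln 3 + 1/(1-p) * ln (1+p) \<le> 0"
  proof -
    have "1/(1-p) * ln (1+p) \<le> 1/(1-p) * (p * ln 3)"
      using h assms by (intro mult_left_mono) auto
    then show ?thesis by (simp add: field_simps)
  qed
  then have "exp (-(p/(1-p)) * ln 3 + 1/(1-p) * ln (1+p)) \<le> 1" by simp
  moreover have "3 powr (-(p/(1-p))) * (1+p) powr (1/(1-p)) = exp (-(p/(1-p)) * ln 3 + 1/(1-p) * ln (1+p))"
    using assms unfolding powr_def by (simp add: mult_exp_exp)
  ultimately show ?thesis by simp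
qed

lemma E2:
  fixes p :: real assumes "0 < p" "p < 1"
  shows "p powr (1/(1-p)) + 3 powr (-(p/(1-p))) \<le> 1"
proof -
  define t where "t = p/(1-p)"
  have t0: "0 < t" using assms by (simp add: t_def)
  have pt: "p = t/(1+t)" using assms by (simp add: t_def field_simps)
  have qt: "1/(1-p) = 1 + t" using assms by (simp add: t_def field_simps)
  have "ln p \<le> p - 1" using assms by (intro ln_le_minus_one) auto
  also have "\<dots> = -(1/(1+t))" using pt t0 by (simp add: field_simps)
  finally have lp: "ln p \<le> -(1/(1+t))" .
  have "p powr t = exp (t * ln p)" using assms by (simp add: powr_def)
  also have "\<dots> \<le> exp (-(t/(1+t)))"
  proof -
    have "t * ln p \<le> t * (-(1/(1+t)))" using lp t0 by (intro mult_left_mono) auto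
    then show ?thesis by simp
  qed
  also have "\<dots> \<le> 1 / (1 + t/(1+t))" using t0 by (intro expm_le) auto
  also have "\<dots> = (1+t)/(1+2*t)" using t0 by (simp add: field_simps)
  finally have a1: "p powr t \<le> (1+t)/(1+2*t)" .
  have "p powr (1/(1-p)) = p * p powr t" using assms qt by (simp add: powr_add)
  also have "\<dots> \<le> p * ((1+t)/(1+2*t))" using a1 assms by (intro mult_left_mono) auto
  also have "\<dots> = t/(1+2*t)" using pt t0 by (simp add: field_simps)
  finally have b1: "p powr (1/(1-p)) \<le> t/(1+2*t)" .
  have "3 powr (-(p/(1-p))) = exp (-(t * ln 3))" by (simp add: powr_def t_def)
  also have "\<dots> \<le> exp (-t)" using ln3_ge1 t0 by simp
  also have "\<dots> \<le> 1/(1+t)" using t0 by (intro expm_le) auto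
  finally have b2: "3 powr (-(p/(1-p))) \<le> 1/(1+t)" .
  have "t/(1+2*t) + 1/(1+t) = (t*(1+t) + (1+2*t)) / ((1+2*t)*(1+t))" using t0 by (simp add: field_simps)
  also have "\<dots> \<le> 1" using t0 by (simp add: divide_le_eq_1 algebra_simps add_pos_nonneg)
  finally have "t/(1+2*t) + 1/(1+t) \<le> 1" .
  then show ?thesis using b1 b2 by linarith
qed

theorem lemma6:
  fixes n :: nat and p :: real
  assumes "n \<ge> 2" and "0 < p" and "p < 1"
  shows "(real n powr p - (real n - 1) powr p) powr (1 / (1 - p))
         + 3 powr (- p / (1 - p))
           * ((real n - 2) * real n powr p - (real n - 3) * (real n - 1) powr p) powr (1 / (1 - p))
         \<le> (real n - 1) powr (p / (1 - p))"
proof -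
  define m where "m = real n - 1"
  define q where "q = 1 / (1 - p)"
  define t where "t = p / (1 - p)"
  have m1: "1 \<le> m" using assms(1) by (simp add: m_def)
  have m0: "0 < m" using m1 by simp
  have q1: "1 \<le> q" using assms by (simp add: q_def field_simps)
  have pq: "p * q = t" by (simp add: q_def t_def)
  have mm: "m powr p * m powr (1-p) = m" using m0 by (simp add: powr_add[symmetric])
  have Y: "(m+1) powr p * m powr (1-p) \<le> p*(m+1) + (1-p)*m"
    using Youngs_inequality_0[of p "1-p" "m+1" m] assms m0 by simp
  define s where "s = (m+1) powr p * m powr (1-p) - m"
  have sp: "s \<le> p" using Y by (simp add: s_def algebra_simps)
  have s0: "0 \<le> s"
  proof -
    have "m powr p \<le> (m+1) powr p" using m0 assms by (intro powr_mono2) auto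
    then have "m powr p * m powr (1-p) \<le> (m+1) powr p * m powr (1-p)"
      by (intro mult_right_mono) auto
    then show ?thesis using mm by (simp add: s_def)
  qed
  have aeq: "(m+1) powr p - m powr p = m powr p * (s/m)"
  proof -
    have "m powr p * (s/m) = ((m+1) powr p * (m powr p * m powr (1-p)) - m * m powr p) / m"
      by (simp add: s_def field_simps)
    also have "\<dots> = (m+1) powr p - m powr p" using mm m0 by (simp add: field_simps)
    finally show ?thesis by simp
  qed
  have n1: "real n = m + 1" by (simp add: m_def)
  have beq: "(real n - 2) * real n powr p - (real n - 3) * (real n - 1) powr p
        = m powr p * (1 + (m-1)*s/m)"
  proof -
    have "(real n - 2) * real n powr p - (real n - 3) * (real n - 1) powr p
        = (m-1) * ((m+1) powr p - m powr p) + m powr p"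
      by (simp add: n1 algebra_simps)
    also have "\<dots> = (m-1) * (m powr p * (s/m)) + m powr p" by (simp only: aeq)
    also have "\<dots> = m powr p * (1 + (m-1)*s/m)" using m0 by (simp add: field_simps)
    finally show ?thesis .
  qed
  have ex: "- p / (1 - p) = - t" by (simp add: t_def)
  have mp: "(m powr p) powr q = m powr t" using pq by (simp add: powr_powr)
  have S1: "(s/m) powr q \<le> (1/m) * p powr q"
  proof -
    have "(s/m) powr q = (1/m) powr q * s powr q" using m0 s0 by (simp add: powr_mult[symmetric])
    also have "\<dots> \<le> (1/m) * p powr q"
    proof (rule mult_mono)
      show "(1/m) powr q \<le> 1/m" using m1 q1 by (intro powr_le_one_le) auto
      show "s powr q \<le> p powr q" using s0 sp q1 by (intro powr_mono2) auto
    qed (use m0 in auto)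
    finally show ?thesis .
  qed
  have S2: "(1 + (m-1)*s/m) powr q \<le> 1/m + (1 - 1/m) * (1+p) powr q"
  proof -
    let ?r = "1 - 1/m"
    have r0: "0 \<le> ?r" "?r \<le> 1" using m1 by (auto simp: field_simps)
    have "(1 + (m-1)*s/m) = (1 - ?r) *\<^sub>R 1 + ?r *\<^sub>R (1+s)" using m0 by (simp add: field_simps)
    then have "(1 + (m-1)*s/m) powr q = ((1 - ?r) *\<^sub>R 1 + ?r *\<^sub>R (1+s)) powr q" by simp
    also have "\<dots> \<le> (1 - ?r) * 1 powr q + ?r * (1+s) powr q"
      using convex_onD[OF powr_convex[OF q1], of ?r 1 "1+s"] r0 s0 by simp
    also have "\<dots> \<le> 1/m + (1 - 1/m) * (1+p) powr q"
      using r0 s0 sp q1 by (auto intro!: mult_left_mono powr_mono2)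
    finally show ?thesis .
  qed
  have E1': "3 powr (-t) * (1+p) powr q \<le> 1" using E1[OF assms(2,3)] by (simp add: t_def q_def)
  have E2': "p powr q + 3 powr (-t) \<le> 1" using E2[OF assms(2,3)] by (simp add: t_def q_def)
  have K: "(s/m) powr q + 3 powr (-t) * (1 + (m-1)*s/m) powr q \<le> 1"
  proof -
    have "(s/m) powr q + 3 powr (-t) * (1 + (m-1)*s/m) powr q
        \<le> (1/m) * p powr q + 3 powr (-t) * (1/m + (1 - 1/m) * (1+p) powr q)"
      using S1 S2 by (intro add_mono mult_left_mono) auto
    also have "\<dots> = (1/m) * (p powr q + 3 powr (-t)) + (1 - 1/m) * (3 powr (-t) * (1+p) powr q)"
      by (simp add: algebra_simps)
    also have "\<dots> \<le> (1/m) * 1 + (1 - 1/m) * 1"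
      using E1' E2' m1 by (intro add_mono mult_left_mono) (auto simp: field_simps)
    finally show ?thesis by simp
  qed
  have "(real n powr p - (real n - 1) powr p) powr (1 / (1 - p))
         + 3 powr (- p / (1 - p))
           * ((real n - 2) * real n powr p - (real n - 3) * (real n - 1) powr p) powr (1 / (1 - p))
      = (m powr p * (s/m)) powr q + 3 powr (-t) * (m powr p * (1 + (m-1)*s/m)) powr q"
    unfolding beq ex q_def[symmetric] using aeq by (simp add: n1)
  also have "\<dots> = m powr t * ((s/m) powr q + 3 powr (-t) * (1 + (m-1)*s/m) powr q)"
  proof -
    have nn: "0 \<le> 1 + (m-1)*s/m" using m1 s0 by simp
    have e1: "(m powr p * (s/m)) powr q = (m powr p) powr q * (s/m) powr q"
      using m0 s0 by (intro powr_mult)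
    have e2: "(m powr p * (1 + (m-1)*s/m)) powr q = (m powr p) powr q * (1 + (m-1)*s/m) powr q"
      using m0 nn by (intro powr_mult)
    show ?thesis unfolding e1 e2 mp by (simp only: algebra_simps)
  qed
  also have "\<dots> \<le> m powr t * 1" using K by (intro mult_left_mono) auto
  also have "\<dots> = (real n - 1) powr (p / (1 - p))" by (simp add: m_def t_def)
  finally show ?thesis .
qed

end
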